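(* For every finite field $\mathbb{F}_q$, the unit-graph on $\operatorname{Mat}_2(\mathbb{F}_q)$ is strongly regular.
   Context: The unit-graph on $\operatorname{Mat}_2(\mathbb{F}_q)$ is the graph with vertex set $\operatorname{Mat}_2(\mathbb{F}_q)$ in which $A$ and $B$ are adjacent iff $B - A \in \operatorname{GL}_2(\mathbb{F}_q)$. A non-empty, non-complete regular graph is strongly regular with parameters $(n,k,a,c)$ if it has $n$ vertices, is $k$-regular, every pair of distinct adjacent vertices has exactly $a$ common neighbours, and every pair of distinct nonadjacent vertices has exactly $c$ common neighbours. *)

theory Defs
  imports "HOL-Analysis.Analysis"
begin

definition simple_graph :: "'v set \<Rightarrow> ('v \<Rightarrow> 'v \<Rightarrow> bool) \<Rightarrow> bool" where
  "simple_graph V E \<longleftrightarrow>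
     (\<forall>x\<in>V. \<forall>y\<in>V. E x y \<longrightarrow> E y x) \<and> (\<forall>x\<in>V. \<not> E x x)"

definition strongly_regular_with ::
  "'v set \<Rightarrow> ('v \<Rightarrow> 'v \<Rightarrow> bool) \<Rightarrow> nat \<Rightarrow> nat \<Rightarrow> nat \<Rightarrow> nat \<Rightarrow> bool" where
  "strongly_regular_with V E n k a c \<longleftrightarrow>
     simple_graph V E \<and> finite V \<and>
     V \<noteq> {} \<and>
     (\<exists>x\<in>V. \<exists>y\<in>V. x \<noteq> y \<and> \<not> E x y) \<and>
     card V = n \<and>
     (\<forall>x\<in>V. card {y\<in>V. E x y} = k) \<and>
     (\<forall>x\<in>V. \<forall>y\<in>V. x \<noteq> y \<and> E x y \<longrightarrow> card {z\<in>V. E x z \<and> E y z} = a) \<and>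
     (\<forall>x\<in>V. \<forall>y\<in>V. x \<noteq> y \<and> \<not> E x y \<longrightarrow> card {z\<in>V. E x z \<and> E y z} = c)"

definition strongly_regular :: "'v set \<Rightarrow> ('v \<Rightarrow> 'v \<Rightarrow> bool) \<Rightarrow> bool" where
  "strongly_regular V E \<longleftrightarrow> (\<exists>n k a c. strongly_regular_with V E n k a c)"

definition unit_graph_adj :: "'a::field^2^2 \<Rightarrow> 'a^2^2 \<Rightarrow> bool" where
  "unit_graph_adj A B \<longleftrightarrow> invertible (B - A)"

end

theory Submission
  imports Defs
begin

type_synonym 'a m2 = "'a^2^2"

definition g2 :: "'a::{field,finite}^2^2 \<Rightarrow> nat" where
  "g2 D = card {W. invertible W \<and> invertible (W - D)}"

lemma mul_sub_distrib2:
  fixes P W D Q :: "'a::field^2^2"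
  shows "P ** (W - D) ** Q = P ** W ** Q - P ** D ** Q"
  by (simp add: matrix_matrix_mult_def vec_eq_iff sum_2 algebra_simps)

lemma inv_mul_iff:
  fixes P W Q :: "'a::field^2^2"
  assumes "invertible P" "invertible Q"
  shows "invertible (P ** W ** Q) \<longleftrightarrow> invertible W"
  using assms by (auto simp: invertible_det_nz det_mul)

lemma g2_le:
  fixes P D Q :: "'a::{field,finite}^2^2"
  assumes P: "invertible P" and Q: "invertible Q"
  shows "g2 D \<le> g2 (P ** D ** Q)"
proof -
  have inj: "inj (\<lambda>W. P ** W ** Q)"
  proof (rule injI)
    fix x y assume h: "P ** x ** Q = P ** y ** Q"
    obtain P' where P': "P' ** P = mat 1" using P invertible_left_inverse by blast
    obtain Q' where Q': "Q ** Q' = mat 1" using Q invertible_right_inverse by blast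
    have "P' ** (P ** x ** Q) ** Q' = P' ** (P ** y ** Q) ** Q'" using h by simp
    thus "x = y" by (metis P' Q' matrix_mul_assoc matrix_mul_lid matrix_mul_rid)
  qed
  have "(\<lambda>W. P ** W ** Q) ` {W. invertible W \<and> invertible (W - D)}
        \<subseteq> {W. invertible W \<and> invertible (W - P ** D ** Q)}"
    using P Q by (auto simp: inv_mul_iff mul_sub_distrib2[symmetric])
  hence "card ((\<lambda>W. P ** W ** Q) ` {W. invertible W \<and> invertible (W - D)})
        \<le> g2 (P ** D ** Q)" unfolding g2_def by (intro card_mono) auto
  thus ?thesis unfolding g2_def using card_image[OF inj_on_subset[OF inj subset_UNIV]] by metis
qed

lemma g2_eq:
  fixes P D Q :: "'a::{field,finite}^2^2"
  assumes P: "invertible P" and Q: "invertible Q"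
  shows "g2 (P ** D ** Q) = g2 D"
proof -
  obtain P' where P': "P' ** P = mat 1" "P ** P' = mat 1" using P invertible_def by blast
  obtain Q' where Q': "Q ** Q' = mat 1" "Q' ** Q = mat 1" using Q invertible_def by blast
  have "invertible P'" "invertible Q'" using P' Q' invertible_def by blast+
  hence "g2 (P ** D ** Q) \<le> g2 (P' ** (P ** D ** Q) ** Q')" by (rule g2_le)
  also have "P' ** (P ** D ** Q) ** Q' = D"
    by (metis P'(1) Q'(1) matrix_mul_assoc matrix_mul_lid matrix_mul_rid)
  finally show ?thesis using g2_le[OF P Q, of D] by simp
qed

definition mk2 :: "'a::field \<Rightarrow> 'a \<Rightarrow> 'a \<Rightarrow> 'a \<Rightarrow> 'a^2^2" where
  "mk2 a b c d = (\<chi> i j. if i = 1 then (if j = 1 then a else b) else (if j = 1 then c else d))"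

lemma mk2_nth[simp]: "mk2 a b c d $ 1 $ 1 = a" "mk2 a b c d $ 1 $ 2 = b"
  "mk2 a b c d $ 2 $ 1 = c" "mk2 a b c d $ 2 $ 2 = d"
  by (simp_all add: mk2_def)

lemma mk2_eq: "(D::'a::field^2^2) = mk2 (D$1$1) (D$1$2) (D$2$1) (D$2$2)"
  by (simp add: vec_eq_iff forall_2)

lemma mk2_mult: "mk2 a b c d ** mk2 a' b' c' d' =
   mk2 (a*a' + b*c') (a*b'+b*d') (c*a'+d*c') (c*b'+d*d')"
  by (simp add: vec_eq_iff forall_2 matrix_matrix_mult_def sum_2)

lemma mk2_inv: "invertible (mk2 a b c d) \<longleftrightarrow> a*d - b*c \<noteq> 0"
  by (simp add: invertible_det_nz det_2)

definition E11 :: "'a::field^2^2" where "E11 = mk2 1 0 0 0"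

lemma rank1_form:
  fixes D :: "'a::field^2^2"
  assumes "D \<noteq> 0" "\<not> invertible D"
  shows "\<exists>P Q. invertible P \<and> invertible Q \<and> D = P ** E11 ** Q"
proof -
  obtain a b c d where D: "D = mk2 a b c d" using mk2_eq by blast
  have z: "a*d = b*c" using assms(2) D mk2_inv by auto
  have nz: "\<not> (a = 0 \<and> b = 0 \<and> c = 0 \<and> d = 0)"
    using assms(1) D by (auto simp: vec_eq_iff forall_2)
  show ?thesis
  proof (cases "a = 0")
    case False
    have dd: "d = b*c/a" using False z by (simp add: eq_divide_eq mult.commute)
    show ?thesis
      apply (rule exI[of _ "mk2 a 0 c 1"], rule exI[of _ "mk2 1 (b/a) 0 1"])
      using False z dd by (auto simp: mk2_inv D E11_def mk2_mult mult.commute)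
  next
    case a: True
    show ?thesis
    proof (cases "b = 0")
      case False
      hence c: "c = 0" using a z by simp
      show ?thesis
        apply (rule exI[of _ "mk2 b 0 d 1"], rule exI[of _ "mk2 0 1 1 0"])
        using False a c by (auto simp: mk2_inv D E11_def mk2_mult)
    next
      case b: True
      show ?thesis
      proof (cases "c = 0")
        case False
        show ?thesis
          apply (rule exI[of _ "mk2 0 1 c 0"], rule exI[of _ "mk2 1 (d/c) 0 1"])
          using False a b by (auto simp: mk2_inv D E11_def mk2_mult)
      next
        case c: True
        hence d: "d \<noteq> 0" using a b nz by auto
        show ?thesis
          apply (rule exI[of _ "mk2 0 1 d 0"], rule exI[of _ "mk2 0 1 1 0"])
          using d a b c by (auto simp: mk2_inv D E11_def mk2_mult)
      qed
    qed
  qed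
qed

lemma common_nb:
  fixes x y :: "'a::{field,finite}^2^2"
  shows "card {z. unit_graph_adj x z \<and> unit_graph_adj y z} = g2 (y - x)"
proof -
  have "{z. unit_graph_adj x z \<and> unit_graph_adj y z} =
        (\<lambda>W. W + x) ` {W. invertible W \<and> invertible (W - (y - x))}"
    unfolding unit_graph_adj_def
    by (auto simp: image_iff algebra_simps intro!: exI[of _ "_ - x"])
  moreover have "inj (\<lambda>W::'a^2^2. W + x)" by (simp add: inj_on_def)
  ultimately show ?thesis unfolding g2_def by (simp add: card_image inj_on_subset)
qed

theorem corollary3p4:
  shows "strongly_regular (UNIV :: ((('a::{field,finite})^2)^2) set) unit_graph_adj"
proof -
  have i1: "invertible (mat 1 :: 'a^2^2)" by (simp add: invertible_det_nz)
  have E0: "(E11::'a^2^2) \<noteq> 0" by (simp add: E11_def vec_eq_iff forall_2)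
  have Ei: "\<not> invertible (E11::'a^2^2)" by (simp add: E11_def mk2_inv)
  have deg: "card {y. unit_graph_adj x y} = card {y::'a^2^2. invertible y}" for x :: "'a^2^2"
  proof -
    have "{y. unit_graph_adj x y} = (\<lambda>W. W + x) ` {y. invertible y}"
      unfolding unit_graph_adj_def by (auto simp: image_iff intro!: exI[of _ "_ - x"])
    moreover have "inj (\<lambda>W::'a^2^2. W + x)" by (simp add: inj_on_def)
    ultimately show ?thesis by (simp add: card_image inj_on_subset)
  qed
  have adj: "g2 D = g2 (mat 1 :: 'a^2^2)" if "invertible D" for D :: "'a^2^2"
    using g2_eq[OF that i1, of "mat 1"] by simp
  have nadj: "g2 D = g2 (E11 :: 'a^2^2)" if "D \<noteq> 0" "\<not> invertible D" for D :: "'a^2^2"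
    using rank1_form[OF that] g2_eq by metis
  have sg: "simple_graph (UNIV :: ('a^2^2) set) unit_graph_adj"
    unfolding simple_graph_def unit_graph_adj_def
  proof (intro conjI ballI impI)
    fix x y :: "'a^2^2" assume "invertible (y - x)"
    hence "invertible (mat 1 ** (y - x) ** (- mat 1))"
      using inv_mul_iff[of "mat 1" "- mat 1" "y - x"] i1
      by (simp add: invertible_det_nz det_2 mat_def)
    moreover have "mat 1 ** (y - x) ** (- mat 1) = x - y"
      by (simp add: vec_eq_iff forall_2 matrix_matrix_mult_def sum_2 mat_def)
    ultimately show "invertible (x - y)" by simp
  next
    fix x :: "'a^2^2" show "\<not> invertible (x - x)"
      by (simp add: invertible_det_nz det_2)
  qed
  show ?thesis
    unfolding strongly_regular_def strongly_regular_with_def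
  proof (intro exI conjI ballI impI)
    show "\<exists>x\<in>UNIV. \<exists>y\<in>UNIV. x \<noteq> y \<and> \<not> unit_graph_adj x (y::'a^2^2)"
      using E0 Ei by (intro bexI[of _ 0] bexI[of _ E11]) (auto simp: unit_graph_adj_def)
  next
    fix x y :: "'a^2^2" assume "x \<noteq> y \<and> unit_graph_adj x y"
    thus "card {z \<in> UNIV. unit_graph_adj x z \<and> unit_graph_adj y z} = g2 (mat 1 :: 'a^2^2)"
      using common_nb[of x y] adj[of "y - x"] unfolding unit_graph_adj_def by simp
  next
    fix x y :: "'a^2^2" assume "x \<noteq> y \<and> \<not> unit_graph_adj x y"
    thus "card {z \<in> UNIV. unit_graph_adj x z \<and> unit_graph_adj y z} = g2 (E11 :: 'a^2^2)"
      using common_nb[of x y] nadj[of "y - x"] unfolding unit_graph_adj_def by auto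
  qed (use sg deg in auto)
qed

end
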